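(* Let $f,a,b,h_{1},h_{2}\in\mathbb{C}[x]$ be nonzero polynomials satisfying \[ b(x)=-h_{1}(x)h_{2}(x),\qquad f(x)a(x)=f(x-1)h_{1}(x)+f(x+1)h_{2}(x+1). \] Let $d=\max\{\deg(a),\deg(h_{1}),\deg(h_{2})\}$, $d_{f}=\deg(f)$, and write $a(x)=\sum_{i=0}^{d}a^{(i)}x^{i}$, $h_{1}(x)=\sum_{i=0}^{d}h_{1}^{(i)}x^{i}$, $h_{2}(x)=\sum_{i=0}^{d}h_{2}^{(i)}x^{i}$. Let $c_{1},c_{2}$ be the leading coefficients of $h_{1},h_{2}$, and $A,B$ the leading coefficients of $a,b$. Then: (1) If $\deg(a)=\deg(h_{1})>\deg(h_{2})$, then $c_{1}=A$, $c_{2}=-\frac{B}{A}$ and $d_{f}=\frac{a^{(d-1)}-h_{1}^{(d-1)}-h_{2}^{(d-1)}}{-A}$. (2) If $\deg(a)=\deg(h_{2})>\deg(h_{1})$, then $c_{1}=-\frac{B}{A}$, $c_{2}=A$ and $d_{f}=\frac{a^{(d-1)}-h_{1}^{(d-1)}-h_{2}^{(d-1)}-dA}{A}$. (3) If $\deg(h_{1})=\deg(h_{2})>\deg(a)$, then $\{c_{1},c_{2}\}=\{\sqrt{B},-\sqrt{B}\}$ and $d_{f}=\frac{a^{(d-1)}-h_{1}^{(d-1)}-h_{2}^{(d-1)}-dh_{2}^{(d)}}{h_{2}^{(d)}-h_{1}^{(d)}}$. (4) If $\deg(h_{1})=\deg(h_{2})=\deg(a)$, then $c_{1},c_{2}$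 are the roots of $x^{2}-Ax-B=0$, and: (a) if $c=c_{1}=c_{2}$ (so $B=-c^{2}$, $A=2c$), then $d_{f}$ is a solution of \[ \left(a^{(d-2)}-h_{1}^{(d-2)}-\left(h_{2}^{(d-2)}+(d-1)h_{2}^{(d-1)}+\tbinom{d}{2}h_{2}^{(d)}\right)\right)+d_{f}\left(h_{1}^{(d-1)}-\left(h_{2}^{(d-1)}+dh_{2}^{(d)}\right)\right)-\tbinom{d_{f}}{2}A=0; \] (b) otherwise $d_{f}=\frac{a^{(d-1)}-h_{1}^{(d-1)}-h_{2}^{(d-1)}-dh_{2}^{(d)}}{h_{2}^{(d)}-h_{1}^{(d)}}$.
   Context: Coefficients $a^{(i)},h_1^{(i)},h_2^{(i)}$ with $i<0$ are taken to be $0$. *)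

theory Defs
  imports "HOL-Computational_Algebra.Polynomial" "HOL-Analysis.Analysis"
begin

definition cf :: "complex poly \<Rightarrow> int \<Rightarrow> complex" where
  "cf p i = (if i < 0 then 0 else coeff p (nat i))"

end

theory Submission
  imports Defs
begin

lemma pcomp_pow: "pcompose (p ^ n) q = (pcompose p (q::complex poly)) ^ n"
  by (induction n) (simp_all add: pcompose_mult one_pCons pcompose_pCons)

lemma pcomp_monom: "pcompose (monom (x::complex) i) q = smult x (q ^ i)"
  by (simp add: monom_altdef pcompose_smult pcomp_pow pcompose_pCons)

lemma coeff_shift:
  fixes f :: "complex poly"
  assumes "degree f \<le> N"
  shows "coeff (pcompose f [:c,1:]) k = (\<Sum>i\<le>N. coeff f i * (if k \<le> i then of_nat (i choose k) * c^(i-k) else 0))"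
proof -
  have "pcompose f [:c,1:] = (\<Sum>i\<le>N. smult (coeff f i) ([:c,1:]^i))"
    by (subst poly_as_sum_of_monoms'[OF assms, symmetric]) (simp add: pcompose_sum pcomp_monom)
  also have "coeff \<dots> k = (\<Sum>i\<le>N. coeff f i * coeff ([:c,1:]^i) k)" by (simp add: coeff_sum)
  also have "\<dots> = (\<Sum>i\<le>N. coeff f i * (if k \<le> i then of_nat (i choose k) * c^(i-k) else 0))"
  proof (rule sum.cong[OF refl])
    fix i show "coeff f i * coeff ([:c,1:]^i) k = coeff f i * (if k \<le> i then of_nat (i choose k) * c^(i-k) else 0)"
    proof (cases "k \<le> i")
      case True then show ?thesis by (simp add: coeff_linear_poly_power)
    next
      case False
      have "degree ([:c,1::complex:]^i) \<le> i" by (simp add: degree_linear_power)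
      then show ?thesis using False by (simp add: coeff_eq_0)
    qed
  qed
  finally show ?thesis .
qed

lemma cf_nz: "cf p i \<noteq> 0 \<Longrightarrow> 0 \<le> i \<and> i \<le> int (degree p)"
  unfolding cf_def by (auto split: if_splits dest: le_degree)

lemma cf_add: "cf (p + q) i = cf p i + cf q i"
  by (simp add: cf_def)

lemma cf_mult_S:
  assumes S: "finite S" and sup: "\<And>i. 0 \<le> i \<Longrightarrow> i \<le> k \<Longrightarrow> cf p i \<noteq> 0 \<Longrightarrow> cf q (k-i) \<noteq> 0 \<Longrightarrow> i \<in> S"
  shows "cf (p*q) k = (\<Sum>i\<in>S. cf p i * cf q (k-i))"
proof (cases "k < 0")
  case True
  have "cf p i * cf q (k-i) = 0" for i using True by (simp add: cf_def)
  then have "(\<Sum>i\<in>S. cf p i * cf q (k-i)) = 0" by (intro sum.neutral) auto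
  then show ?thesis using True by (simp add: cf_def[of "p*q" k])
next
  case False
  define T where "T = {i\<in>{0..k}. cf p i * cf q (k-i) \<noteq> 0}"
  have "cf (p*q) k = (\<Sum>i\<le>nat k. coeff p i * coeff q (nat k - i))"
    using False by (simp add: cf_def coeff_mult)
  also have "\<dots> = (\<Sum>i\<in>{0..k}. cf p i * cf q (k - i))"
    by (rule sum.reindex_bij_witness[of _ nat int]) (use False in \<open>auto simp: cf_def nat_diff_distrib\<close>)
  also have "\<dots> = (\<Sum>i\<in>T. cf p i * cf q (k - i))"
    by (rule sum.mono_neutral_right) (auto simp: T_def)
  also have "\<dots> = (\<Sum>i\<in>S. cf p i * cf q (k - i))"
    by (rule sum.mono_neutral_left) (use S in \<open>auto simp: T_def intro!: sup dest: cf_nz\<close>)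
  finally show ?thesis .
qed

lemma cf_mult0:
  assumes "degree p \<le> m" "degree q \<le> l"
  shows "cf (p*q) (int m + int l) = cf p m * cf q l"
proof -
  have "cf (p*q) (int m + int l) = (\<Sum>i\<in>{int m}. cf p i * cf q (int m + int l - i))"
    by (rule cf_mult_S) (use assms in \<open>auto dest!: cf_nz\<close>)
  then show ?thesis by simp
qed

lemma cf_mult1:
  assumes "degree p \<le> m" "degree q \<le> l"
  shows "cf (p*q) (int m + int l - 1) = cf p m * cf q (int l - 1) + cf p (int m - 1) * cf q l"
proof -
  have "cf (p*q) (int m + int l - 1) = (\<Sum>i\<in>{int m, int m - 1}. cf p i * cf q (int m + int l - 1 - i))"
    by (rule cf_mult_S) (use assms in \<open>auto dest!: cf_nz\<close>)
  then show ?thesis by (simp add: algebra_simps)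
qed

lemma cf_mult2:
  assumes "degree p \<le> m" "degree q \<le> l"
  shows "cf (p*q) (int m + int l - 2) = cf p m * cf q (int l - 2) + cf p (int m - 1) * cf q (int l - 1)
     + cf p (int m - 2) * cf q l"
proof -
  have "cf (p*q) (int m + int l - 2) = (\<Sum>i\<in>{int m, int m - 1, int m - 2}. cf p i * cf q (int m + int l - 2 - i))"
    by (rule cf_mult_S) (use assms in \<open>auto dest!: cf_nz\<close>)
  then show ?thesis by (simp add: algebra_simps)
qed

lemma shift0:
  assumes "degree f \<le> N"
  shows "cf (pcompose f [:c,1:]) (int N) = cf f (int N)"
  using assms by (simp add: cf_def coeff_shift[OF assms] sum.delta' if_distrib cong: if_cong)


lemma shift1:
  assumes "degree f \<le> N"
  shows "cf (pcompose f [:c,1:]) (int N - 1) = cf f (int N - 1) + of_nat N * c * cf f (int N)"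
proof (cases N)
  case 0 then show ?thesis by (simp add: cf_def)
next
  case (Suc M)
  have "coeff (pcompose f [:c,1:]) M = (\<Sum>i\<in>{M, Suc M}. coeff f i * (if M \<le> i then of_nat (i choose M) * c^(i-M) else 0))"
    unfolding coeff_shift[OF assms] by (rule sum.mono_neutral_right) (auto simp: Suc)
  moreover have "nat (1 + int M) = Suc M" by simp
  ultimately show ?thesis using Suc by (simp add: cf_def algebra_simps)
qed

lemma shift2:
  assumes "degree f \<le> N"
  shows "cf (pcompose f [:c,1:]) (int N - 2) = cf f (int N - 2) + (of_nat N - 1) * c * cf f (int N - 1)
     + of_nat (N choose 2) * c^2 * cf f (int N)"
proof (cases "N < 2")
  case True then show ?thesis by (auto simp: cf_def less_2_cases_iff)
next
  case False
  then obtain M where M: "N = Suc (Suc M)" by (metis add_2_eq_Suc le_add_diff_inverse not_less)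
  have "coeff (pcompose f [:c,1:]) M = (\<Sum>i\<in>{M, Suc M, Suc (Suc M)}. coeff f i * (if M \<le> i then of_nat (i choose M) * c^(i-M) else 0))"
    unfolding coeff_shift[OF assms] by (rule sum.mono_neutral_right) (auto simp: M)
  moreover have "Suc (Suc M) choose M = Suc (Suc M) choose 2"
    by (metis add_2_eq_Suc' binomial_symmetric diff_add_inverse2 le_add2)
  moreover have "nat (1 + int M) = Suc M" "nat (2 + int M) = Suc (Suc M)" by simp_all
  ultimately show ?thesis using M by (simp add: cf_def algebra_simps)
qed

theorem theorem30:
  fixes f a b h1 h2 :: "complex poly"
    and d df :: nat and c1 c2 A B :: complex
  assumes nz: "f \<noteq> 0" "a \<noteq> 0" "b \<noteq> 0" "h1 \<noteq> 0" "h2 \<noteq> 0"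
    and hb: "b = - (h1 * h2)"
    and heq: "f * a = pcompose f [:-1, 1:] * h1
                      + pcompose f [:1, 1:] * pcompose h2 [:1, 1:]"
    and hd: "d = max (degree a) (max (degree h1) (degree h2))"
    and hdf: "df = degree f"
    and hc1: "c1 = lead_coeff h1" and hc2: "c2 = lead_coeff h2"
    and hA: "A = lead_coeff a" and hB: "B = lead_coeff b"
  shows
   "(degree a = degree h1 \<and> degree h1 > degree h2 \<longrightarrow>
       c1 = A \<and> c2 = - B / A \<and>
       of_nat df = (cf a (int d - 1) - cf h1 (int d - 1) - cf h2 (int d - 1)) / (- A))
  \<and> (degree a = degree h2 \<and> degree h2 > degree h1 \<longrightarrow>
       c1 = - B / A \<and> c2 = A \<and>
       of_nat df = (cf a (int d - 1) - cf h1 (int d - 1) - cf h2 (int d - 1)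
                    - of_nat d * A) / A)
  \<and> (degree h1 = degree h2 \<and> degree h2 > degree a \<longrightarrow>
       {c1, c2} = {csqrt B, - csqrt B} \<and>
       of_nat df = (cf a (int d - 1) - cf h1 (int d - 1) - cf h2 (int d - 1)
                    - of_nat d * cf h2 (int d)) / (cf h2 (int d) - cf h1 (int d)))
  \<and> (degree h1 = degree h2 \<and> degree h2 = degree a \<longrightarrow>
       [:-B, -A, 1:] = [:-c1, 1:] * [:-c2, 1:] \<and>
       (c1 = c2 \<longrightarrow>
          (cf a (int d - 2) - cf h1 (int d - 2)
             - (cf h2 (int d - 2) + (of_nat d - 1) * cf h2 (int d - 1)
                + of_nat (d choose 2) * cf h2 (int d)))
          + of_nat df * (cf h1 (int d - 1) - (cf h2 (int d - 1) + of_nat d * cf h2 (int d)))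
          - of_nat (df choose 2) * A = 0) \<and>
       (c1 \<noteq> c2 \<longrightarrow>
          of_nat df = (cf a (int d - 1) - cf h1 (int d - 1) - cf h2 (int d - 1)
                    - of_nat d * cf h2 (int d)) / (cf h2 (int d) - cf h1 (int d))))"
proof -
  define n where "n = df"
  define X where "X = pcompose f [:-1, 1:]"
  define Y where "Y = pcompose f [:1, 1:]"
  define Z where "Z = pcompose h2 [:1, 1:]"
  have degf: "degree f \<le> n" using hdf n_def by simp
  have degX: "degree X \<le> n" using hdf n_def by (simp add: X_def degree_pcompose)
  have degY: "degree Y \<le> n" using hdf n_def by (simp add: Y_def degree_pcompose)
  have dega: "degree a \<le> d" and degh1: "degree h1 \<le> d" and degh2: "degree h2 \<le> d" using hd by auto
  have degZ: "degree Z \<le> d" using degh2 by (simp add: Z_def degree_pcompose)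
  have heq': "f * a = X * h1 + Y * Z" using heq by (simp add: X_def Y_def Z_def)
  define F0 where "F0 = cf f (int n)"
  define F1 where "F1 = cf f (int n - 1)"
  define F2 where "F2 = cf f (int n - 2)"
  have F0nz: "F0 \<noteq> 0" using nz(1) by (simp add: F0_def cf_def hdf n_def)
  have X0: "cf X (int n) = F0" unfolding X_def F0_def by (rule shift0[OF degf])
  have X1: "cf X (int n - 1) = F1 - of_nat n * F0" unfolding X_def F0_def F1_def using shift1[OF degf, of "-1"] by simp
  have X2: "cf X (int n - 2) = F2 - (of_nat n - 1) * F1 + of_nat (n choose 2) * F0"
    unfolding X_def F0_def F1_def F2_def using shift2[OF degf, of "-1"] by (simp add: algebra_simps)
  have Y0: "cf Y (int n) = F0" unfolding Y_def F0_def by (rule shift0[OF degf])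
  have Y1: "cf Y (int n - 1) = F1 + of_nat n * F0" unfolding Y_def F0_def F1_def using shift1[OF degf, of "1"] by simp
  have Y2: "cf Y (int n - 2) = F2 + (of_nat n - 1) * F1 + of_nat (n choose 2) * F0"
    unfolding Y_def F0_def F1_def F2_def using shift2[OF degf, of "1"] by simp
  have Z0: "cf Z (int d) = cf h2 (int d)" unfolding Z_def by (rule shift0[OF degh2])
  have Z1: "cf Z (int d - 1) = cf h2 (int d - 1) + of_nat d * cf h2 (int d)" unfolding Z_def using shift1[OF degh2, of "1"] by simp
  have Z2: "cf Z (int d - 2) = cf h2 (int d - 2) + (of_nat d - 1) * cf h2 (int d - 1) + of_nat (d choose 2) * cf h2 (int d)"
    unfolding Z_def using shift2[OF degh2, of "1"] by simp
  have R0: "cf (f*a) (int n + int d) = cf (X*h1) (int n + int d) + cf (Y*Z) (int n + int d)"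
    using heq' by (simp add: cf_add)
  have R1: "cf (f*a) (int n + int d - 1) = cf (X*h1) (int n + int d - 1) + cf (Y*Z) (int n + int d - 1)"
    using heq' by (simp add: cf_add)
  have R2: "cf (f*a) (int n + int d - 2) = cf (X*h1) (int n + int d - 2) + cf (Y*Z) (int n + int d - 2)"
    using heq' by (simp add: cf_add)
  note m0 = cf_mult0[OF degf dega] cf_mult0[OF degX degh1] cf_mult0[OF degY degZ]
  note m1 = cf_mult1[OF degf dega] cf_mult1[OF degX degh1] cf_mult1[OF degY degZ]
  note m2 = cf_mult2[OF degf dega] cf_mult2[OF degX degh1] cf_mult2[OF degY degZ]
  define a0 where "a0 = cf a (int d)"
  define a1 where "a1 = cf a (int d - 1)"
  define a2 where "a2 = cf a (int d - 2)"
  define p0 where "p0 = cf h1 (int d)"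
  define p1 where "p1 = cf h1 (int d - 1)"
  define p2 where "p2 = cf h1 (int d - 2)"
  define q0 where "q0 = cf h2 (int d)"
  define q1 where "q1 = cf h2 (int d - 1)"
  define q2 where "q2 = cf h2 (int d - 2)"
  have E0: "F0 * a0 = F0 * p0 + F0 * q0"
    using R0 unfolding m0 X0 Y0 Z0 by (simp add: F0_def a0_def p0_def q0_def)
  have E1: "F0 * a1 + F1 * a0 = F0 * p1 + (F1 - of_nat n * F0) * p0 + (F0 * (q1 + of_nat d * q0) + (F1 + of_nat n * F0) * q0)"
    using R1 unfolding m1 X0 Y0 Z0 X1 Y1 Z1 by (simp add: F0_def F1_def a0_def p0_def q0_def a1_def p1_def q1_def)
  have E2: "F0 * a2 + F1 * a1 + F2 * a0 = F0 * p2 + (F1 - of_nat n * F0) * p1 + (F2 - (of_nat n - 1) * F1 + of_nat (n choose 2) * F0) * p0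
     + (F0 * (q2 + (of_nat d - 1) * q1 + of_nat (d choose 2) * q0) + (F1 + of_nat n * F0) * (q1 + of_nat d * q0)
        + (F2 + (of_nat n - 1) * F1 + of_nat (n choose 2) * F0) * q0)"
    using R2 unfolding m2 X0 Y0 Z0 X1 Y1 Z1 X2 Y2 Z2
    by (simp add: F0_def F1_def F2_def a0_def p0_def q0_def a1_def p1_def q1_def a2_def p2_def q2_def)
  have K0: "a0 = p0 + q0" using E0 F0nz by (metis distrib_left mult_left_cancel)
  have "F0 * a1 = F0 * (p1 + q1 + of_nat d * q0 + of_nat n * (q0 - p0))"
    using E1 unfolding K0 by (simp add: algebra_simps)
  then have K1: "a1 = p1 + q1 + of_nat d * q0 + of_nat n * (q0 - p0)" using F0nz by simp
  have K2: "(a2 - p2 - (q2 + (of_nat d - 1) * q1 + of_nat (d choose 2) * q0)) + of_nat n * (p1 - (q1 + of_nat d * q0))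
     - of_nat (n choose 2) * a0 = 0" if pq: "p0 = q0"
  proof -
    have "F0 * ((a2 - p2 - (q2 + (of_nat d - 1) * q1 + of_nat (d choose 2) * q0)) + of_nat n * (p1 - (q1 + of_nat d * q0))
     - of_nat (n choose 2) * a0) = 0"
      using E2 unfolding K1 K0 pq by (simp add: algebra_simps)
    then show ?thesis using F0nz by simp
  qed
  have lcf: "cf p (int (degree p)) = lead_coeff p" for p by (simp add: cf_def)
  have cf0: "cf p (int d) = 0" if "degree p < d" for p using that by (simp add: cf_def coeff_eq_0)
  have Bc: "B = - (c1 * c2)" using hB hb hc1 hc2 by (simp add: lead_coeff_mult)
  have Anz: "A \<noteq> 0" using hA nz(2) by simp
  have C1: "c1 = A \<and> c2 = - B / A \<and>
       of_nat df = (cf a (int d - 1) - cf h1 (int d - 1) - cf h2 (int d - 1)) / (- A)"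
    if "degree a = degree h1" "degree h1 > degree h2"
  proof -
    have dd: "d = degree a" using hd that by simp
    have "a0 = A" "p0 = c1" "q0 = 0" using that dd lcf[of a] lcf[of h1] cf0[of h2] hA hc1
      by (auto simp: a0_def p0_def q0_def)
    then show ?thesis using K0 K1 Anz Bc by (auto simp: n_def a1_def p1_def q1_def field_simps)
  qed
  have C2: "c1 = - B / A \<and> c2 = A \<and>
       of_nat df = (cf a (int d - 1) - cf h1 (int d - 1) - cf h2 (int d - 1)
                    - of_nat d * A) / A"
    if "degree a = degree h2" "degree h2 > degree h1"
  proof -
    have dd: "d = degree a" using hd that by simp
    have "a0 = A" "q0 = c2" "p0 = 0" using that dd lcf[of a] lcf[of h2] cf0[of h1] hA hc2
      by (auto simp: a0_def p0_def q0_def)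
    then show ?thesis using K0 K1 Anz Bc by (auto simp: n_def a1_def p1_def q1_def field_simps)
  qed
  have C3: "{c1, c2} = {csqrt B, - csqrt B} \<and>
       of_nat df = (cf a (int d - 1) - cf h1 (int d - 1) - cf h2 (int d - 1)
                    - of_nat d * cf h2 (int d)) / (cf h2 (int d) - cf h1 (int d))"
    if "degree h1 = degree h2" "degree h2 > degree a"
  proof -
    have dd: "d = degree h1" using hd that by simp
    have e: "a0 = 0" "q0 = c2" "p0 = c1" using that dd lcf[of h1] lcf[of h2] cf0[of a] hc1 hc2
      by (auto simp: a0_def p0_def q0_def)
    have c1nz: "c1 \<noteq> 0" using hc1 nz(4) by simp
    have c2: "c2 = - c1" using K0 e by (simp add: eq_neg_iff_add_eq_0 add.commute)
    have "csqrt B ^ 2 = c1 ^ 2" using Bc c2 by (simp add: power2_eq_square[of c1])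
    then have "csqrt B = c1 \<or> csqrt B = - c1" by (metis power2_eq_iff)
    then have s: "{c1, c2} = {csqrt B, - csqrt B}" using c2 by auto
    have "q0 - p0 \<noteq> 0" using e c2 c1nz by simp
    then have "of_nat n = (a1 - p1 - q1 - of_nat d * q0) / (q0 - p0)" using K1 by (simp add: field_simps)
    then show ?thesis using s by (simp add: n_def a1_def p1_def q1_def q0_def p0_def)
  qed
  have C4: "[:-B, -A, 1:] = [:-c1, 1:] * [:-c2, 1:] \<and>
       (c1 = c2 \<longrightarrow>
          (cf a (int d - 2) - cf h1 (int d - 2)
             - (cf h2 (int d - 2) + (of_nat d - 1) * cf h2 (int d - 1)
                + of_nat (d choose 2) * cf h2 (int d)))
          + of_nat df * (cf h1 (int d - 1) - (cf h2 (int d - 1) + of_nat d * cf h2 (int d)))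
          - of_nat (df choose 2) * A = 0) \<and>
       (c1 \<noteq> c2 \<longrightarrow>
          of_nat df = (cf a (int d - 1) - cf h1 (int d - 1) - cf h2 (int d - 1)
                    - of_nat d * cf h2 (int d)) / (cf h2 (int d) - cf h1 (int d)))"
    if "degree h1 = degree h2" "degree h2 = degree a"
  proof -
    have dd: "d = degree h1" using hd that by simp
    have e: "a0 = A" "q0 = c2" "p0 = c1" using that dd lcf[of h1] lcf[of h2] lcf[of a] hc1 hc2 hA
      by (auto simp: a0_def p0_def q0_def)
    have P: "[:-B, -A, 1:] = [:-c1, 1:] * [:-c2, 1:]" using K0 e Bc by (simp add: algebra_simps)
    have Q: "(cf a (int d - 2) - cf h1 (int d - 2)
             - (cf h2 (int d - 2) + (of_nat d - 1) * cf h2 (int d - 1)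
                + of_nat (d choose 2) * cf h2 (int d)))
          + of_nat df * (cf h1 (int d - 1) - (cf h2 (int d - 1) + of_nat d * cf h2 (int d)))
          - of_nat (df choose 2) * A = 0" if "c1 = c2"
      using K2 e that by (simp add: n_def a2_def p2_def q2_def p1_def q1_def q0_def)
    have R: "of_nat df = (cf a (int d - 1) - cf h1 (int d - 1) - cf h2 (int d - 1)
                    - of_nat d * cf h2 (int d)) / (cf h2 (int d) - cf h1 (int d))" if "c1 \<noteq> c2"
    proof -
      have "q0 - p0 \<noteq> 0" using e that by simp
      then have "of_nat n = (a1 - p1 - q1 - of_nat d * q0) / (q0 - p0)" using K1 by (simp add: field_simps)
      then show ?thesis by (simp add: n_def a1_def p1_def q1_def q0_def p0_def)
    qed
    show ?thesis using P Q R by blast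
  qed
  show ?thesis using C1 C2 C3 C4 by blast
qed

end
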